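(* Let $G$ be a connected graph and let $v\in V(G)$ be a cut-vertex such that $G-v$ has exactly two connected components $G_1$ and $G_2$. If $G[V(G_i)\cup\{v\}]$ is isomorphic to a path for $i=1$ or for $i=2$, then $v$ is not a basis forced vertex of $G$.
   Context: All graphs are finite and simple. For vertices $u,v$ of a connected graph $G$, $d(u,v)$ is the length of a shortest $u$–$v$ path. A set $R\subseteq V(G)$ is a resolving set if for all distinct $x,y\in V(G)$ there is $r\in R$ with $d(r,x)\neq d(r,y)$. The metric dimension $\dim(G)$ is the minimum cardinality of a resolving set, and a resolving set of cardinality $\dim(G)$ is a metric basis. A vertex is a basis forced vertex if it belongs to every metric basis of $G$. A cut-vertex is a vertex $v$ such that $G-v$ is disconnected; $G[S]$ denotes the subgraph induced by $S$. *)

theory Defs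
  imports Main
begin

definition graph :: "'a set \<Rightarrow> ('a \<Rightarrow> 'a \<Rightarrow> bool) \<Rightarrow> bool" where
  "graph V E \<longleftrightarrow> finite V \<and> (\<forall>x y. E x y \<longrightarrow> x \<in> V \<and> y \<in> V)
     \<and> (\<forall>x y. E x y \<longrightarrow> E y x) \<and> (\<forall>x. \<not> E x x)"

definition walk :: "'a set \<Rightarrow> ('a \<Rightarrow> 'a \<Rightarrow> bool) \<Rightarrow> 'a list \<Rightarrow> bool" where
  "walk V E xs \<longleftrightarrow> xs \<noteq> [] \<and> set xs \<subseteq> V \<and>
     (\<forall>i. Suc i < length xs \<longrightarrow> E (xs ! i) (xs ! Suc i))"

definition reachable :: "'a set \<Rightarrow> ('a \<Rightarrow> 'a \<Rightarrow> bool) \<Rightarrow> 'a \<Rightarrow> 'a \<Rightarrow> bool" where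
  "reachable V E u w \<longleftrightarrow> (\<exists>xs. walk V E xs \<and> hd xs = u \<and> last xs = w)"

definition connected_graph :: "'a set \<Rightarrow> ('a \<Rightarrow> 'a \<Rightarrow> bool) \<Rightarrow> bool" where
  "connected_graph V E \<longleftrightarrow> V \<noteq> {} \<and> (\<forall>u\<in>V. \<forall>w\<in>V. reachable V E u w)"

definition components :: "'a set \<Rightarrow> ('a \<Rightarrow> 'a \<Rightarrow> bool) \<Rightarrow> 'a set set" where
  "components V E = {{w. reachable V E u w} | u. u \<in> V}"

definition dist :: "'a set \<Rightarrow> ('a \<Rightarrow> 'a \<Rightarrow> bool) \<Rightarrow> 'a \<Rightarrow> 'a \<Rightarrow> nat" where
  "dist V E u w = (LEAST n. \<exists>xs. walk V E xs \<and> hd xs = u \<and> last xs = w \<and> length xs = Suc n)"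

definition resolving_set :: "'a set \<Rightarrow> ('a \<Rightarrow> 'a \<Rightarrow> bool) \<Rightarrow> 'a set \<Rightarrow> bool" where
  "resolving_set V E R \<longleftrightarrow> R \<subseteq> V \<and>
     (\<forall>x\<in>V. \<forall>y\<in>V. x \<noteq> y \<longrightarrow> (\<exists>r\<in>R. dist V E r x \<noteq> dist V E r y))"

definition metric_dim :: "'a set \<Rightarrow> ('a \<Rightarrow> 'a \<Rightarrow> bool) \<Rightarrow> nat" where
  "metric_dim V E = (LEAST k. \<exists>R. resolving_set V E R \<and> card R = k)"

definition metric_basis :: "'a set \<Rightarrow> ('a \<Rightarrow> 'a \<Rightarrow> bool) \<Rightarrow> 'a set \<Rightarrow> bool" where
  "metric_basis V E R \<longleftrightarrow> resolving_set V E R \<and> card R = metric_dim V E"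

definition basis_forced :: "'a set \<Rightarrow> ('a \<Rightarrow> 'a \<Rightarrow> bool) \<Rightarrow> 'a \<Rightarrow> bool" where
  "basis_forced V E v \<longleftrightarrow> (\<forall>R. metric_basis V E R \<longrightarrow> v \<in> R)"

text \<open>The graph with vertex set S and edges E restricted to S (i.e. the induced subgraph G[S])
  is isomorphic to a path P_n.\<close>
definition is_path_graph :: "'a set \<Rightarrow> ('a \<Rightarrow> 'a \<Rightarrow> bool) \<Rightarrow> bool" where
  "is_path_graph S E \<longleftrightarrow> (\<exists>n f. bij_betw f {0..<n} S \<and>
     (\<forall>i<n. \<forall>j<n. E (f i) (f j) \<longleftrightarrow> (j = Suc i \<or> i = Suc j)))"

end

theory Submission
  imports Defs
begin

lemma walk_single: "x \<in> W \<Longrightarrow> walk W E [x]"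
  by (simp add: walk_def)

lemma walk_Cons2: "walk W E (x # y # ys) \<longleftrightarrow> x \<in> W \<and> E x y \<and> walk W E (y # ys)"
proof
  assume a: "walk W E (x # y # ys)"
  then show "x \<in> W \<and> E x y \<and> walk W E (y # ys)"
    unfolding walk_def
  proof (intro conjI allI impI)
    fix i assume "Suc i < length (y # ys)"
    with a show "E ((y # ys) ! i) ((y # ys) ! Suc i)" unfolding walk_def
      by (metis Suc_less_eq length_Cons nth_Cons_Suc)
  qed auto
next
  assume a: "x \<in> W \<and> E x y \<and> walk W E (y # ys)"
  show "walk W E (x # y # ys)"
    unfolding walk_def
  proof (intro conjI allI impI)
    fix i assume i: "Suc i < length (x # y # ys)"
    show "E ((x # y # ys) ! i) ((x # y # ys) ! Suc i)"
    proof (cases i)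
      case 0 then show ?thesis using a by simp
    next
      case (Suc j) then show ?thesis using a i unfolding walk_def by auto
    qed
  qed (use a in \<open>auto simp: walk_def\<close>)
qed

lemma walk_rev:
  assumes sym: "\<forall>x y. E x y \<longrightarrow> E y x" and w: "walk W E xs"
  shows "walk W E (rev xs)"
  unfolding walk_def
proof (intro conjI allI impI)
  show "rev xs \<noteq> []" "set (rev xs) \<subseteq> W" using w by (auto simp: walk_def)
  fix i assume i: "Suc i < length (rev xs)"
  let ?L = "length xs"
  have "E (xs ! (?L - Suc (Suc i))) (xs ! Suc (?L - Suc (Suc i)))"
    using w i unfolding walk_def by auto
  moreover have "Suc (?L - Suc (Suc i)) = ?L - Suc i" using i by simp
  ultimately show "E (rev xs ! i) (rev xs ! Suc i)"
    using i sym by (simp add: rev_nth)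
qed

lemma walk_append:
  assumes "walk W E xs" "walk W E ys" "last xs = hd ys"
  shows "walk W E (xs @ tl ys)"
proof -
  have "xs \<noteq> []" using assms by (simp add: walk_def)
  then show ?thesis using assms(1,3)
  proof (induction xs rule: list_nonempty_induct)
    case (single x)
    then show ?case using assms(2) by (cases ys) (auto simp: walk_def)
  next
    case (cons x xs)
    then obtain y zs where xs: "xs = y # zs" by (cases xs) auto
    have "walk W E xs" "x \<in> W" "E x y" using cons.prems walk_Cons2[of W E x y zs] xs by auto
    then have "walk W E (xs @ tl ys)" using cons by simp
    then have "walk W E (y # (zs @ tl ys))" using xs by simp
    then have "walk W E (x # y # (zs @ tl ys))"
      using \<open>x \<in> W\<close> \<open>E x y\<close> walk_Cons2[of W E x y "zs @ tl ys"] by simp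
    then show ?case using xs by simp
  qed
qed

lemma walk_lip:
  fixes \<psi> :: "'a \<Rightarrow> int"
  assumes "walk W E xs" and lip: "\<forall>a\<in>W. \<forall>b\<in>W. E a b \<longrightarrow> \<psi> b \<le> \<psi> a + c"
  shows "\<psi> (last xs) \<le> \<psi> (hd xs) + c * int (length xs - 1)"
proof -
  have "xs \<noteq> []" using assms by (simp add: walk_def)
  then show ?thesis using assms(1)
  proof (induction xs rule: list_nonempty_induct)
    case (single x) then show ?case by simp
  next
    case (cons x xs)
    then obtain y zs where xs: "xs = y # zs" by (cases xs) auto
    have "walk W E xs" "x \<in> W" "E x y" using cons.prems walk_Cons2[of W E x y zs] xs
      by auto
    then have "y \<in> W" using xs by (simp add: walk_def)
    have "\<psi> (last xs) \<le> \<psi> (hd xs) + c * int (length xs - 1)" using cons.IH \<open>walk W E xs\<close> by blast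
    then have "\<psi> (last xs) \<le> \<psi> y + c * int (length xs - 1)" using xs by simp
    moreover have "\<psi> y \<le> \<psi> x + c" using lip \<open>x \<in> W\<close> \<open>y \<in> W\<close> \<open>E x y\<close> by auto
    ultimately show ?case using xs by (simp add: algebra_simps)
  qed
qed

lemma dist_le:
  assumes "walk V E xs" "hd xs = a" "last xs = b"
  shows "dist V E a b \<le> length xs - 1"
proof -
  have "length xs = Suc (length xs - 1)" using assms by (cases xs) (auto simp: walk_def)
  then show ?thesis unfolding dist_def using assms by (metis (mono_tags, lifting) Least_le)
qed

lemma dist_walk:
  assumes "reachable V E a b"
  shows "\<exists>xs. walk V E xs \<and> hd xs = a \<and> last xs = b \<and> length xs = Suc (dist V E a b)"
proof -
  obtain xs where xs: "walk V E xs" "hd xs = a" "last xs = b" using assms reachable_def by metis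
  then have "length xs = Suc (length xs - 1)" by (cases xs) (auto simp: walk_def)
  then have "\<exists>n xs. walk V E xs \<and> hd xs = a \<and> last xs = b \<and> length xs = Suc n" using xs by blast
  then show ?thesis unfolding dist_def by (rule LeastI_ex)
qed

lemma dist_self: "x \<in> V \<Longrightarrow> dist V E x x = 0"
  using dist_le[of V E "[x]" x x] walk_single by fastforce

lemma dist_zero: "reachable V E x y \<Longrightarrow> dist V E x y = 0 \<Longrightarrow> x = y"
  using dist_walk[of V E x y] by (auto simp: length_Suc_conv)

lemma reach_trans: "reachable W E a b \<Longrightarrow> reachable W E b c \<Longrightarrow> reachable W E a c"
proof -
  assume "reachable W E a b" "reachable W E b c"
  then obtain xs ys where "walk W E xs" "hd xs = a" "last xs = b" "walk W E ys" "hd ys = b" "last ys = c"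
    unfolding reachable_def by blast
  moreover have "xs \<noteq> []" "ys \<noteq> []" using calculation by (auto simp: walk_def)
  moreover have "last (xs @ tl ys) = c" using calculation
    by (cases ys) (auto simp: last_append)
  moreover have "hd (xs @ tl ys) = a" using calculation by simp
  moreover have "walk W E (xs @ tl ys)" using calculation walk_append[of W E xs ys] by simp
  ultimately show ?thesis unfolding reachable_def by blast
qed

lemma reach_sym: "\<forall>x y. E x y \<longrightarrow> E y x \<Longrightarrow> reachable W E a b \<Longrightarrow> reachable W E b a"
  unfolding reachable_def
  by (metis walk_rev hd_rev last_rev)


lemma reach_mem: "reachable W E a b \<Longrightarrow> a \<in> W \<and> b \<in> W"
  unfolding reachable_def walk_def by (metis hd_in_set last_in_set subsetD)

lemma walk_sub: "walk W E xs \<Longrightarrow> set xs \<subseteq> W' \<Longrightarrow> walk W' E xs"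
  unfolding walk_def by auto

locale cutv =
  fixes V :: "'a set" and E v C c
  assumes G: "graph V E" and conn: "connected_graph V E" and vV: "v \<in> V"
    and cW: "c \<in> V - {v}" and Cdef: "C = {w. reachable (V - {v}) E c w}"
begin

lemma Esym: "\<forall>x y. E x y \<longrightarrow> E y x" using G unfolding graph_def by blast
lemma finV: "finite V" using G unfolding graph_def by blast
lemma EV: "E x y \<Longrightarrow> x \<in> V \<and> y \<in> V" using G unfolding graph_def by blast

lemma Csub: "C \<subseteq> V - {v}"
proof
  fix x assume "x \<in> C"
  then have "reachable (V - {v}) E c x" using Cdef by simp
  then show "x \<in> V - {v}" using reach_mem[of "V - {v}" E c x] by simp
qed
lemma cC: "c \<in> C"
proof -
  have "walk (V - {v}) E [c]" using cW by (rule walk_single)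
  then have "reachable (V - {v}) E c c" unfolding reachable_def by force
  then show ?thesis using Cdef by blast
qed

lemma reachC: "a \<in> C \<Longrightarrow> reachable (V - {v}) E a b \<Longrightarrow> b \<in> C"
  using Cdef reach_trans[of "V - {v}" E c a b] by blast

lemma edgeC: "a \<in> C \<Longrightarrow> b \<in> V - {v} \<Longrightarrow> E a b \<Longrightarrow> b \<in> C"
proof -
  assume a: "a \<in> C" "b \<in> V - {v}" "E a b"
  have "a \<in> V - {v}" using a Csub by blast
  then have "walk (V - {v}) E [a, b]" using a walk_Cons2[of "V - {v}" E a b "[]"] walk_single[of b] by simp
  then have "reachable (V - {v}) E a b" unfolding reachable_def by force
  then show ?thesis using a reachC by blast
qed

lemma C_conn: "a \<in> C \<Longrightarrow> b \<in> C \<Longrightarrow> reachable (V - {v}) E a b"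
proof -
  assume "a \<in> C" "b \<in> C"
  then have "reachable (V - {v}) E c a" "reachable (V - {v}) E c b" using Cdef by auto
  then show ?thesis using reach_trans[of "V - {v}" E a c b] reach_sym[OF Esym] by blast
qed

lemma walkC: "walk (V - {v}) E xs \<Longrightarrow> hd xs \<in> C \<Longrightarrow> set xs \<subseteq> C"
proof -
  assume w: "walk (V - {v}) E xs" and h: "hd xs \<in> C"
  have "xs \<noteq> []" using w by (simp add: walk_def)
  then show ?thesis using w h
  proof (induction xs rule: list_nonempty_induct)
    case (single x) then show ?case by simp
  next
    case (cons x xs)
    then obtain y zs where xs: "xs = y # zs" by (cases xs) auto
    have "walk (V - {v}) E xs" "E x y" using cons.prems(1) walk_Cons2[of _ E x y zs] xs
      by auto
    moreover have "y \<in> V - {v}" using \<open>walk (V - {v}) E xs\<close> xs unfolding walk_def by simp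
    moreover have "y \<in> C" using edgeC cons.prems calculation by simp
    ultimately show ?case using cons xs by simp
  qed
qed

lemma reachV: "a \<in> V \<Longrightarrow> b \<in> V \<Longrightarrow> reachable V E a b"
  using conn by (simp add: connected_graph_def)

lemma dist_edge:
  assumes xV: "x \<in> V" and a: "a \<in> V" "b \<in> V" "E a b"
  shows "dist V E x b \<le> dist V E x a + 1"
proof -
  have "\<exists>xs. walk V E xs \<and> hd xs = x \<and> last xs = a \<and> length xs = Suc (dist V E x a)"
    using reachV[OF xV a(1)] by (rule dist_walk)
  then obtain xs where xs: "walk V E xs" "hd xs = x" "last xs = a" "length xs = Suc (dist V E x a)"
    by blast
  have "walk V E [a, b]" using a walk_Cons2[of V E a b "[]"] walk_single[of b] by simp
  then have w: "walk V E (xs @ [b])" using walk_append[of V E xs "[a,b]"] xs by simp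
  have "xs \<noteq> []" using xs(1) by (simp add: walk_def)
  then have "hd (xs @ [b]) = x" using xs(2) by simp
  then have "dist V E x b \<le> length (xs @ [b]) - 1" using dist_le[OF w] by simp
  then show ?thesis using xs by simp
qed

end


locale cutq = cutv +
  fixes f :: "nat \<Rightarrow> 'a" and n :: nat
  assumes bij: "bij_betw f {0..<n} (C \<union> {v})"
    and pe: "\<forall>i<n. \<forall>j<n. E (f i) (f j) \<longleftrightarrow> (j = Suc i \<or> i = Suc j)"
begin

definition idx where "idx = inv_into {0..<n} f"

lemma injf: "inj_on f {0..<n}" using bij by (rule bij_betw_imp_inj_on)
lemma imgf: "f ` {0..<n} = C \<union> {v}" using bij by (rule bij_betw_imp_surj_on)

lemma idx1: "x \<in> C \<union> {v} \<Longrightarrow> idx x < n \<and> f (idx x) = x"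
proof -
  assume x: "x \<in> C \<union> {v}"
  then have "x \<in> f ` {0..<n}" using imgf by simp
  then have "idx x \<in> {0..<n}" "f (idx x) = x" unfolding idx_def
    using inv_into_into[of x f "{0..<n}"] f_inv_into_f[of x f "{0..<n}"] by auto
  then show ?thesis by simp
qed

lemma idx2: "i < n \<Longrightarrow> idx (f i) = i"
  unfolding idx_def using injf by (simp add: inv_into_f_f)

lemma fP: "i < n \<Longrightarrow> f i \<in> C \<union> {v}" using imgf by auto

lemma PV: "C \<union> {v} \<subseteq> V" using Csub vV by blast

lemma fV: "i < n \<Longrightarrow> f i \<in> V" using fP PV by blast

lemma vnotC: "v \<notin> C" using Csub by blast

lemma edgeP:
  assumes "x \<in> C \<union> {v}" "y \<in> C \<union> {v}" "E x y"
  shows "idx y = Suc (idx x) \<or> idx x = Suc (idx y)"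
proof -
  have "idx x < n" "f (idx x) = x" "idx y < n" "f (idx y) = y" using idx1 assms by auto
  then show ?thesis using pe assms(3) by metis
qed

lemma n2: "n \<ge> 2"
proof -
  have "card {0..<n} = card (C \<union> {v})" using bij by (rule bij_betw_same_card)
  moreover have "finite (C \<union> {v})" using PV finV finite_subset by blast
  moreover have "{c, v} \<subseteq> C \<union> {v}" using cC by blast
  moreover have "card {c, v} = 2" using cW by simp
  ultimately show ?thesis by (metis card_atLeastLessThan card_mono diff_zero)
qed

lemma endpoint:
  assumes k: "k < n" "f k = v"
  shows "k = 0 \<or> k = n - 1"
proof (rule ccontr)
  assume "\<not> (k = 0 \<or> k = n - 1)"
  then have k0: "0 < k" "k + 1 < n" using k by auto
  define a where "a = f (k - 1)"
  define b where "b = f (k + 1)"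
  have "a \<in> C \<union> {v}" "b \<in> C \<union> {v}" using fP k0 unfolding a_def b_def by auto
  moreover have "a \<noteq> v" "b \<noteq> v" unfolding a_def b_def using injf k k0
    by (metis atLeastLessThan_iff inj_on_eq_iff less_imp_diff_less zero_le n_not_Suc_n
        Suc_eq_plus1 diff_less less_numeral_extra(1) order.strict_trans less_irrefl_nat)+
  ultimately have ab: "a \<in> C" "b \<in> C" by auto
  then have "reachable (V - {v}) E a b" by (rule C_conn)
  then obtain xs where xs: "walk (V - {v}) E xs" "hd xs = a" "last xs = b"
    unfolding reachable_def by blast
  have "set xs \<subseteq> C" using walkC[OF xs(1)] xs(2) ab(1) by simp
  then have wC: "walk C E xs" using walk_sub[OF xs(1)] by simp
  define chi :: "'a \<Rightarrow> int" where "chi x = (if idx x < k then 0 else 1)" for x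
  have lip: "\<forall>a'\<in>C. \<forall>b'\<in>C. E a' b' \<longrightarrow> chi b' \<le> chi a' + 0"
  proof (intro ballI impI)
    fix a' b' assume h: "a' \<in> C" "b' \<in> C" "E a' b'"
    have "idx a' \<noteq> k" using idx1[of a'] h(1) k(2) vnotC by auto
    moreover have "idx b' \<noteq> k" using idx1[of b'] h(2) k(2) vnotC by auto
    moreover have "idx b' = Suc (idx a') \<or> idx a' = Suc (idx b')" using edgeP h by simp
    ultimately show "chi b' \<le> chi a' + 0" unfolding chi_def by auto
  qed
  have "chi (last xs) \<le> chi (hd xs) + 0 * int (length xs - 1)"
    using walk_lip[OF wC lip] .
  moreover have "idx a = k - 1" "idx b = k + 1" unfolding a_def b_def using idx2 k0 by auto
  ultimately show False using xs k0 unfolding chi_def by simp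
qed

end

locale cutp = cutq +
  assumes f0: "f 0 = v"
begin

definition u where "u = f (n - 1)"

lemma idxv: "idx v = 0" using idx2[of 0] f0 n2 by simp
lemma idxu: "idx u = n - 1" unfolding u_def using idx2 n2 by simp
lemma uC: "u \<in> C"
proof -
  have "u \<in> C \<union> {v}" unfolding u_def using fP n2 by simp
  moreover have "u \<noteq> v" using idxu idxv n2 by auto
  ultimately show ?thesis by blast
qed
lemma uV: "u \<in> V" using uC Csub by blast

lemma idxC: "x \<in> C \<Longrightarrow> idx x \<ge> 1"
proof (rule ccontr)
  assume "x \<in> C" "\<not> idx x \<ge> 1"
  then have "idx x = 0" by simp
  then have "f 0 = x" using idx1[of x] \<open>x \<in> C\<close> by auto
  then show False using f0 vnotC \<open>x \<in> C\<close> by simp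
qed

definition psi :: "'a \<Rightarrow> int" where
  "psi x = (if x \<in> C then - int (idx x) else int (dist V E v x))"

lemma lip: "\<forall>a\<in>V. \<forall>b\<in>V. E a b \<longrightarrow> psi b \<le> psi a + 1"
proof (intro ballI impI)
  fix a b assume h: "a \<in> V" "b \<in> V" "E a b"
  consider "a \<in> C" "b \<in> C" | "a \<in> C" "b \<notin> C" | "a \<notin> C" "b \<in> C" | "a \<notin> C" "b \<notin> C" by blast
  then show "psi b \<le> psi a + 1"
  proof cases
    case 1
    then have "idx b = Suc (idx a) \<or> idx a = Suc (idx b)" using edgeP h by simp
    then show ?thesis using 1 unfolding psi_def by auto
  next
    case 2
    have "b = v"
    proof (rule ccontr)
      assume "b \<noteq> v"
      then have "b \<in> C" using edgeC[of a b] 2 h by simp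
      then show False using 2 by simp
    qed
    then have "idx v = Suc (idx a) \<or> idx a = Suc (idx v)" using edgeP[of a v] h 2 by simp
    then have "idx a = 1" using idxv by simp
    moreover have "psi b = 0" unfolding psi_def using 2 \<open>b = v\<close> dist_self vV by simp
    ultimately show ?thesis unfolding psi_def using 2 by simp
  next
    case 3
    then show ?thesis unfolding psi_def using idxC[of b] by simp
  next
    case 4
    then show ?thesis unfolding psi_def using dist_edge[OF vV h] by simp
  qed
qed

lemma pathwalk: "i < n \<Longrightarrow> walk V E (map f [i..<n])"
  unfolding walk_def
proof (intro conjI allI impI)
  assume i: "i < n"
  then show "map f [i..<n] \<noteq> []" by simp
  show "set (map f [i..<n]) \<subseteq> V" using fV by auto
  fix j assume j: "Suc j < length (map f [i..<n])"
  then have "i + Suc j < n" by simp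
  then have "E (f (i + j)) (f (Suc (i + j)))" using pe by simp
  then show "E (map f [i..<n] ! j) (map f [i..<n] ! Suc j)" using j by simp
qed

lemma revwalk:
  assumes "i < n"
  shows "walk V E (rev (map f [i..<n]))" "hd (rev (map f [i..<n])) = u"
    "last (rev (map f [i..<n])) = f i" "length (rev (map f [i..<n])) = n - i"
proof -
  show "walk V E (rev (map f [i..<n]))" using walk_rev[OF Esym pathwalk[OF assms]] .
  have "[i..<n] = [i..<n-1] @ [n-1]" using assms
    by (metis Suc_diff_1 gr_implies_not0 not_gr_zero le_add_diff_inverse2 less_Suc_eq_le upt_Suc_append
        less_imp_le_nat less_one Suc_leI)
  then show "hd (rev (map f [i..<n])) = u" unfolding u_def by simp
  show "last (rev (map f [i..<n])) = f i" using assms by (simp add: last_rev upt_conv_Cons)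
  show "length (rev (map f [i..<n])) = n - i" by simp
qed

lemma distu: "x \<in> V \<Longrightarrow> int (dist V E u x) = int (n - 1) + psi x"
proof -
  assume xV: "x \<in> V"
  have "\<exists>xs. walk V E xs \<and> hd xs = u \<and> last xs = x \<and> length xs = Suc (dist V E u x)"
    using reachV[OF uV xV] by (rule dist_walk)
  then obtain xs where xs: "walk V E xs" "hd xs = u" "last xs = x" "length xs = Suc (dist V E u x)"
    by blast
  have "psi (last xs) \<le> psi (hd xs) + 1 * int (length xs - 1)"
    using walk_lip[OF xs(1) lip] .
  moreover have "psi u = - int (n - 1)" unfolding psi_def using uC idxu by simp
  ultimately have ge: "psi x \<le> - int (n - 1) + int (dist V E u x)" using xs by simp
  have le: "int (dist V E u x) \<le> int (n - 1) + psi x"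
  proof (cases "x \<in> C")
    case True
    define i where "i = idx x"
    have i: "i < n" "f i = x" using idx1[of x] True unfolding i_def by auto
    have "dist V E u x \<le> n - i - 1"
      using dist_le[OF revwalk(1)[OF i(1)] revwalk(2)[OF i(1)]] revwalk(3,4)[OF i(1)] i by simp
    moreover have "psi x = - int i" unfolding psi_def i_def using True by simp
    ultimately show ?thesis using i by linarith
  next
    case False
    have "\<exists>ys. walk V E ys \<and> hd ys = v \<and> last ys = x \<and> length ys = Suc (dist V E v x)"
      using reachV[OF vV xV] by (rule dist_walk)
    then obtain ys where ys: "walk V E ys" "hd ys = v" "last ys = x" "length ys = Suc (dist V E v x)"
      by blast
    have n0: "0 < n" using n2 by simp
    let ?w = "rev (map f [0..<n])"
    have w: "walk V E ?w" "hd ?w = u" "last ?w = v" "length ?w = n"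
      using revwalk[OF n0] f0 by auto
    have "walk V E (?w @ tl ys)" using walk_append[OF w(1) ys(1)] w(3) ys(2) by simp
    moreover have "hd (?w @ tl ys) = u" using w n0 by simp
    moreover have "last (?w @ tl ys) = x" using ys w by (cases ys) (auto simp: last_append)
    ultimately have "dist V E u x \<le> length (?w @ tl ys) - 1" by (rule dist_le)
    also have "\<dots> = n + dist V E v x - 1" using w ys by simp
    finally have "dist V E u x \<le> n + dist V E v x - 1" .
    moreover have "psi x = int (dist V E v x)" unfolding psi_def using False by simp
    ultimately show ?thesis using n0 by linarith
  qed
  show ?thesis using ge le by linarith
qed

end


context cutp begin

lemma main: "\<not> basis_forced V E v"
proof -
  have resV: "resolving_set V E V"
    unfolding resolving_set_def
  proof (intro conjI ballI impI)
    fix x y assume h: "x \<in> V" "y \<in> V" "x \<noteq> y"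
    have "dist V E x x = 0" using h(1) by (rule dist_self)
    moreover have "dist V E x y \<noteq> 0" using dist_zero[OF reachV[OF h(1,2)]] h(3) by blast
    ultimately show "\<exists>r\<in>V. dist V E r x \<noteq> dist V E r y" using h(1) by metis
  qed simp
  then have "\<exists>k R. resolving_set V E R \<and> card R = k" by blast
  then have "\<exists>R. resolving_set V E R \<and> card R = (LEAST k. \<exists>R. resolving_set V E R \<and> card R = k)"
    by (rule LeastI_ex)
  then obtain R where R: "resolving_set V E R" "card R = metric_dim V E"
    unfolding metric_dim_def by blast
  have RV: "R \<subseteq> V" using R(1) unfolding resolving_set_def by blast
  have finR: "finite R" using RV finV finite_subset by blast
  show ?thesis
  proof (cases "v \<in> R")
    case False
    then show ?thesis using R unfolding basis_forced_def metric_basis_def by blast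
  next
    case True
    define R' where "R' = insert u (R - {v})"
    have uv: "u \<noteq> v" using uC vnotC by blast
    have vR': "v \<notin> R'" unfolding R'_def using uv by simp
    have res': "resolving_set V E R'"
      unfolding resolving_set_def
    proof (intro conjI ballI impI)
      show "R' \<subseteq> V" unfolding R'_def using RV uV by blast
      fix x y assume h: "x \<in> V" "y \<in> V" "x \<noteq> y"
      have dx: "int (dist V E u x) = int (n - 1) + psi x" using distu h(1) .
      have dy: "int (dist V E u y) = int (n - 1) + psi y" using distu h(2) .
      show "\<exists>r\<in>R'. dist V E r x \<noteq> dist V E r y"
      proof (cases "psi x = psi y")
        case False
        then have "dist V E u x \<noteq> dist V E u y" using dx dy by auto
        then show ?thesis unfolding R'_def by blast
      next
        case True
        consider "x \<in> C" "y \<in> C" | "x \<in> C" "y \<notin> C" | "x \<notin> C" "y \<in> C" | "x \<notin> C" "y \<notin> C"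
          by blast
        then show ?thesis
        proof cases
          case 1
          then have "idx x = idx y" using True unfolding psi_def by simp
          moreover have "f (idx x) = x" "f (idx y) = y" using idx1[of x] idx1[of y] 1 by auto
          ultimately have "x = y" by metis
          then show ?thesis using h(3) by simp
        next
          case 2
          then have False using True idxC[of x] unfolding psi_def by simp
          then show ?thesis ..
        next
          case 3
          then have False using True idxC[of y] unfolding psi_def by simp
          then show ?thesis ..
        next
          case 4
          then have dv: "dist V E v x = dist V E v y" using True unfolding psi_def by simp
          obtain r where r: "r \<in> R" "dist V E r x \<noteq> dist V E r y"
            using R(1) h unfolding resolving_set_def by blast
          then have "r \<noteq> v" using dv by blast
          then have "r \<in> R'" unfolding R'_def using r(1) by blast
          then show ?thesis using r(2) by blast
        qed
      qed
    qed
    have "card R' \<le> card (R - {v}) + 1" unfolding R'_def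
      using finR by (simp add: card_insert_if)
    also have "\<dots> = card R" using True finR card_Diff_singleton
      by (metis One_nat_def Suc_pred add.commute card_gt_0_iff empty_iff plus_1_eq_Suc)
    finally have le1: "card R' \<le> metric_dim V E" using R(2) by simp
    have "metric_dim V E \<le> card R'" unfolding metric_dim_def
      using res' by (intro Least_le) blast
    then have "card R' = metric_dim V E" using le1 by simp
    then show ?thesis using res' vR' unfolding basis_forced_def metric_basis_def by blast
  qed
qed

end

context cutq begin

lemma main_q: "\<not> basis_forced V E v"
proof -
  obtain k where k: "k < n" "f k = v" using imgf by (metis UnCI imageE atLeastLessThan_iff insertI1)
  then have "k = 0 \<or> k = n - 1" by (rule endpoint)
  then show ?thesis
  proof
    assume "k = 0"
    then have "cutp V E v C c f n" using k cutq_axioms unfolding cutp_def cutp_axioms_def by simp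
    then show ?thesis by (rule cutp.main)
  next
    assume kn: "k = n - 1"
    define g where "g = f \<circ> (\<lambda>i. n - 1 - i)"
    have rb: "bij_betw (\<lambda>i. n - 1 - i) {0..<n} {0..<n}"
      by (rule bij_betw_byWitness[where f'="\<lambda>i. n - 1 - i"]) auto
    have gb: "bij_betw g {0..<n} (C \<union> {v})" unfolding g_def using bij_betw_trans[OF rb bij] .
    have gpe: "\<forall>i<n. \<forall>j<n. E (g i) (g j) \<longleftrightarrow> (j = Suc i \<or> i = Suc j)"
    proof (intro allI impI)
      fix i j assume ij: "i < n" "j < n"
      have "E (g i) (g j) \<longleftrightarrow> (n - 1 - j = Suc (n - 1 - i) \<or> n - 1 - i = Suc (n - 1 - j))"
        unfolding g_def using pe ij by simp
      also have "\<dots> \<longleftrightarrow> (j = Suc i \<or> i = Suc j)" using ij by auto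
      finally show "E (g i) (g j) \<longleftrightarrow> (j = Suc i \<or> i = Suc j)" .
    qed
    have "g 0 = v" unfolding g_def using k kn by simp
    then have "cutp V E v C c g n" using gb gpe cutv_axioms
      unfolding cutp_def cutp_axioms_def cutq_def cutq_axioms_def by simp
    then show ?thesis by (rule cutp.main)
  qed
qed

end

theorem theorem2:
  fixes V :: "'a set" and E :: "'a \<Rightarrow> 'a \<Rightarrow> bool" and v :: 'a and G1 G2 :: "'a set"
  assumes "graph V E"
    and "connected_graph V E"
    and "v \<in> V"
    and "components (V - {v}) E = {G1, G2}"
    and "G1 \<noteq> G2"
    and "is_path_graph (G1 \<union> {v}) E \<or> is_path_graph (G2 \<union> {v}) E"
  shows "\<not> basis_forced V E v"
proof -
  obtain C where C: "C \<in> components (V - {v}) E" "is_path_graph (C \<union> {v}) E"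
    using assms(4,6) by blast
  obtain c where c: "c \<in> V - {v}" "C = {w. reachable (V - {v}) E c w}"
    using C(1) unfolding components_def by blast
  obtain n f where f: "bij_betw f {0..<n} (C \<union> {v})"
    "\<forall>i<n. \<forall>j<n. E (f i) (f j) \<longleftrightarrow> (j = Suc i \<or> i = Suc j)"
    using C(2) unfolding is_path_graph_def by blast
  have "cutq V E v C c f n"
    unfolding cutq_def cutq_axioms_def cutv_def using assms(1-3) c f by simp
  then show ?thesis by (rule cutq.main_q)
qed

end
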